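(* Let $K$ and $L$ be $n$-element finite sets, $M=K\times L$, and let $u=(u_{kl})_{k\in K,l\in L}$ be a unitary matrix all of whose entries $u_{kl}$ are nonzero. Then the maps $C_u,D_u:F(M)\to\operatorname{End}F(K)$ are unitary isomorphisms of the Hermitian vector spaces $(F(M),\langle\cdot,\cdot\rangle_u)$ and $(\operatorname{End}F(K),\langle\cdot,\cdot\rangle_{HS})$.
   Context: For a finite set $J$, $F(J)$ denotes the space of complex-valued functions on $J$. For $f=(f_{kl})\in F(M)$, $C_uf$ and $D_uf$ are the operators on $F(K)$ whose matrices $(x_{kk'})$ and $(y_{kk'})$ (with respect to the standard basis of delta functions) are $x_{kk'}=\sum_{l\in L}u_{kl}f_{kl}\bar u_{k'l}$ and $y_{kk'}=\sum_{l\in L}u_{kl}f_{k'l}\bar u_{k'l}$. The Hermitian product on $F(M)$ is $\langle f,g\rangle_u=\sum_{k\in K,l\in L}f_{kl}\bar g_{kl}|u_{kl}|^2$, and on $\operatorname{End}F(K)$ the Hilbert–Schmidt product is $\langle X,Y\rangle_{HS}=\operatorname{tr}XY^*=\sum_{k,k'}x_{kk'}\bar y_{kk'}$ where $(x_{kk'}),(y_{kk'})$ are the matrices of $X,Y$. *)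

theory Defs
  imports Complex_Main
begin

text \<open>F(M) with M = K x L is modelled as 'k => 'l => complex; an element of End F(K)
  is represented by its matrix w.r.t. the delta basis, i.e. 'k => 'k => complex.\<close>

definition unitary_mat :: "('k::finite \<Rightarrow> 'l::finite \<Rightarrow> complex) \<Rightarrow> bool" where
  "unitary_mat u \<longleftrightarrow>
     (\<forall>k k'. (\<Sum>l\<in>UNIV. u k l * cnj (u k' l)) = (if k = k' then 1 else 0)) \<and>
     (\<forall>l l'. (\<Sum>k\<in>UNIV. cnj (u k l) * u k l') = (if l = l' then 1 else 0))"

definition C_op :: "('k::finite \<Rightarrow> 'l::finite \<Rightarrow> complex) \<Rightarrow> ('k \<Rightarrow> 'l \<Rightarrow> complex) \<Rightarrow> ('k \<Rightarrow> 'k \<Rightarrow> complex)" where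
  "C_op u f = (\<lambda>k k'. \<Sum>l\<in>UNIV. u k l * f k l * cnj (u k' l))"

definition D_op :: "('k::finite \<Rightarrow> 'l::finite \<Rightarrow> complex) \<Rightarrow> ('k \<Rightarrow> 'l \<Rightarrow> complex) \<Rightarrow> ('k \<Rightarrow> 'k \<Rightarrow> complex)" where
  "D_op u f = (\<lambda>k k'. \<Sum>l\<in>UNIV. u k l * f k' l * cnj (u k' l))"

definition inner_u :: "('k::finite \<Rightarrow> 'l::finite \<Rightarrow> complex) \<Rightarrow> ('k \<Rightarrow> 'l \<Rightarrow> complex) \<Rightarrow> ('k \<Rightarrow> 'l \<Rightarrow> complex) \<Rightarrow> complex" where
  "inner_u u f g = (\<Sum>k\<in>UNIV. \<Sum>l\<in>UNIV. f k l * cnj (g k l) * complex_of_real ((cmod (u k l))\<^sup>2))"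

definition inner_HS :: "('k::finite \<Rightarrow> 'k \<Rightarrow> complex) \<Rightarrow> ('k \<Rightarrow> 'k \<Rightarrow> complex) \<Rightarrow> complex" where
  "inner_HS X Y = (\<Sum>k\<in>UNIV. \<Sum>k'\<in>UNIV. X k k' * cnj (Y k k'))"

definition unitary_iso :: "(('k::finite \<Rightarrow> 'l::finite \<Rightarrow> complex) \<Rightarrow> ('k \<Rightarrow> 'k \<Rightarrow> complex))
   \<Rightarrow> (('k \<Rightarrow> 'l \<Rightarrow> complex) \<Rightarrow> ('k \<Rightarrow> 'l \<Rightarrow> complex) \<Rightarrow> complex)
   \<Rightarrow> (('k \<Rightarrow> 'k \<Rightarrow> complex) \<Rightarrow> ('k \<Rightarrow> 'k \<Rightarrow> complex) \<Rightarrow> complex) \<Rightarrow> bool" where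
  "unitary_iso T ip1 ip2 \<longleftrightarrow>
     (\<forall>a f g. T (\<lambda>k l. a * f k l + g k l) = (\<lambda>k k'. a * T f k k' + T g k k')) \<and>
     bij T \<and>
     (\<forall>f g. ip2 (T f) (T g) = ip1 f g)"

end

theory Submission
  imports Defs
begin

lemma sq_cmod: "complex_of_real ((cmod z)\<^sup>2) = z * cnj z"
  by (simp add: complex_mult_cnj cmod_power2)

lemma swap3: "(\<Sum>a\<in>A. \<Sum>b\<in>B. \<Sum>c\<in>C. F a b c) = (\<Sum>b\<in>B. \<Sum>c\<in>C. \<Sum>a\<in>A. (F a b c :: complex))"
  by (subst sum.swap) (simp add: sum.swap[of _ A C])

lemma C_iso:
  fixes u :: "'k::finite \<Rightarrow> 'l::finite \<Rightarrow> complex"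
  assumes r: "\<And>k k'. (\<Sum>l\<in>UNIV. u k l * cnj (u k' l)) = (if k = k' then 1 else 0)"
    and c: "\<And>l l'. (\<Sum>k\<in>UNIV. cnj (u k l) * u k l') = (if l = l' then 1 else 0)"
  shows "inner_HS (C_op u f) (C_op u g) = inner_u u f g"
proof -
  have "\<And>k. (\<Sum>k'\<in>UNIV. C_op u f k k' * cnj (C_op u g k k'))
     = (\<Sum>l\<in>UNIV. f k l * cnj (g k l) * complex_of_real ((cmod (u k l))\<^sup>2))"
  proof -
    fix k
    have "(\<Sum>k'\<in>UNIV. C_op u f k k' * cnj (C_op u g k k'))
      = (\<Sum>k'\<in>UNIV. \<Sum>l'\<in>UNIV. \<Sum>l\<in>UNIV. (u k l * f k l * cnj (u k l') * cnj (g k l')) * (cnj (u k' l) * u k' l'))"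
      unfolding C_op_def by (simp add: sum_distrib_left sum_distrib_right mult_ac)
    also have "\<dots> = (\<Sum>l'\<in>UNIV. \<Sum>l\<in>UNIV. (u k l * f k l * cnj (u k l') * cnj (g k l')) * (\<Sum>k'\<in>UNIV. cnj (u k' l) * u k' l'))"
      by (subst swap3) (simp only: sum_distrib_left)
    also have "\<dots> = (\<Sum>l\<in>UNIV. u k l * f k l * cnj (u k l) * cnj (g k l))"
      by (simp add: c if_distrib cong: if_cong)
    also have "\<dots> = (\<Sum>l\<in>UNIV. f k l * cnj (g k l) * complex_of_real ((cmod (u k l))\<^sup>2))"
      by (simp only: sq_cmod) (simp add: mult_ac)
    finally show "?thesis k" .
  qed
  then show ?thesis unfolding inner_HS_def inner_u_def by simp
qed

lemma D_iso:
  fixes u :: "'k::finite \<Rightarrow> 'l::finite \<Rightarrow> complex"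
  assumes r: "\<And>k k'. (\<Sum>l\<in>UNIV. u k l * cnj (u k' l)) = (if k = k' then 1 else 0)"
    and c: "\<And>l l'. (\<Sum>k\<in>UNIV. cnj (u k l) * u k l') = (if l = l' then 1 else 0)"
  shows "inner_HS (D_op u f) (D_op u g) = inner_u u f g"
proof -
  have "\<And>k'. (\<Sum>k\<in>UNIV. D_op u f k k' * cnj (D_op u g k k'))
     = (\<Sum>l\<in>UNIV. f k' l * cnj (g k' l) * complex_of_real ((cmod (u k' l))\<^sup>2))"
  proof -
    have dl0: "(\<lambda>l l'. (\<Sum>k\<in>UNIV. u k l * cnj (u k l'))) = (\<lambda>l l'. if l = l' then 1 else 0)"
    proof (intro ext)
      fix l l'
      have "(\<Sum>k\<in>UNIV. u k l * cnj (u k l')) = cnj (\<Sum>k\<in>UNIV. cnj (u k l) * u k l')"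
        by (simp add: mult.commute)
      then show "(\<Sum>k\<in>UNIV. u k l * cnj (u k l')) = (if l = l' then 1 else 0)"
        by (simp add: c)
    qed
    hence dl: "\<And>l l'. (\<Sum>k\<in>UNIV. u k l * cnj (u k l')) = (if l = l' then 1 else 0)" by metis
    fix k'
    have "(\<Sum>k\<in>UNIV. D_op u f k k' * cnj (D_op u g k k'))
      = (\<Sum>k\<in>UNIV. \<Sum>l'\<in>UNIV. \<Sum>l\<in>UNIV. (f k' l * cnj (u k' l) * u k' l' * cnj (g k' l')) * (u k l * cnj (u k l')))"
      unfolding D_op_def by (simp add: sum_distrib_left sum_distrib_right mult_ac)
    also have "\<dots> = (\<Sum>l'\<in>UNIV. \<Sum>l\<in>UNIV. (f k' l * cnj (u k' l) * u k' l' * cnj (g k' l')) * (\<Sum>k\<in>UNIV. u k l * cnj (u k l')))"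
      by (subst swap3) (simp only: sum_distrib_left)
    also have "(\<Sum>l'\<in>UNIV. \<Sum>l\<in>UNIV. (f k' l * cnj (u k' l) * u k' l' * cnj (g k' l')) * (\<Sum>k\<in>UNIV. u k l * cnj (u k l')))
       = (\<Sum>l\<in>UNIV. f k' l * cnj (u k' l) * u k' l * cnj (g k' l))"
      by (simp only: dl) (simp add: if_distrib cong: if_cong)
    also have "\<dots> = (\<Sum>l\<in>UNIV. f k' l * cnj (g k' l) * complex_of_real ((cmod (u k' l))\<^sup>2))"
      by (simp only: sq_cmod) (simp add: mult_ac)
    finally show "?thesis k'" .
  qed
  then show ?thesis unfolding inner_HS_def inner_u_def
    by (subst sum.swap) simp
qed


lemma C_lin: "C_op u (\<lambda>k l. a * f k l + g k l) = (\<lambda>k k'. a * C_op u f k k' + C_op u g k k')"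
  unfolding C_op_def by (simp add: sum.distrib sum_distrib_left algebra_simps)

lemma D_lin: "D_op u (\<lambda>k l. a * f k l + g k l) = (\<lambda>k k'. a * D_op u f k k' + D_op u g k k')"
  unfolding D_op_def by (simp add: sum.distrib sum_distrib_left algebra_simps)

lemma C_bij:
  fixes u :: "'k::finite \<Rightarrow> 'l::finite \<Rightarrow> complex"
  assumes r: "\<And>k k'. (\<Sum>l\<in>UNIV. u k l * cnj (u k' l)) = (if k = k' then 1 else 0)"
    and c: "\<And>l l'. (\<Sum>k\<in>UNIV. cnj (u k l) * u k l') = (if l = l' then 1 else 0)"
    and nz: "\<And>k l. u k l \<noteq> 0"
  shows "bij (C_op u)"
proof (rule o_bij)
  define Ci where "Ci = (\<lambda>X k l. (\<Sum>k'\<in>UNIV. X k k' * u k' l) / u k l)"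
  show "Ci \<circ> C_op u = id"
  proof (intro ext, simp)
    fix f k l
    have "(\<Sum>k'\<in>UNIV. C_op u f k k' * u k' l)
        = (\<Sum>k'\<in>UNIV. \<Sum>l'\<in>UNIV. (u k l' * f k l') * (cnj (u k' l') * u k' l))"
      unfolding C_op_def by (simp add: sum_distrib_right sum_distrib_left mult_ac)
    also have "\<dots> = (\<Sum>l'\<in>UNIV. (u k l' * f k l') * (\<Sum>k'\<in>UNIV. cnj (u k' l') * u k' l))"
      by (subst sum.swap) (simp only: sum_distrib_left)
    also have "\<dots> = u k l * f k l"
      by (simp only: c) (simp add: if_distrib cong: if_cong)
    finally show "Ci (C_op u f) k l = f k l"
      unfolding Ci_def using nz[of k l] by simp
  qed
  show "C_op u \<circ> Ci = id"
  proof (intro ext, simp)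
    fix X k k'
    have e: "\<And>l. u k l * Ci X k l = (\<Sum>j\<in>UNIV. X k j * u j l)"
      unfolding Ci_def using nz by simp
    have "C_op u (Ci X) k k' = (\<Sum>l\<in>UNIV. (u k l * Ci X k l) * cnj (u k' l))"
      unfolding C_op_def by simp
    also have "\<dots> = (\<Sum>l\<in>UNIV. \<Sum>j\<in>UNIV. X k j * (u j l * cnj (u k' l)))"
      by (simp only: e) (simp add: sum_distrib_right sum_distrib_left mult_ac)
    also have "\<dots> = (\<Sum>j\<in>UNIV. X k j * (\<Sum>l\<in>UNIV. u j l * cnj (u k' l)))"
      by (subst sum.swap) (simp only: sum_distrib_left)
    also have "\<dots> = X k k'"
      by (simp only: r) (simp add: if_distrib cong: if_cong)
    finally show "C_op u (Ci X) k k' = X k k'" .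
  qed
qed

lemma D_bij:
  fixes u :: "'k::finite \<Rightarrow> 'l::finite \<Rightarrow> complex"
  assumes r: "\<And>k k'. (\<Sum>l\<in>UNIV. u k l * cnj (u k' l)) = (if k = k' then 1 else 0)"
    and c: "\<And>l l'. (\<Sum>k\<in>UNIV. cnj (u k l) * u k l') = (if l = l' then 1 else 0)"
    and nz: "\<And>k l. u k l \<noteq> 0"
  shows "bij (D_op u)"
proof (rule o_bij)
  define Di where "Di = (\<lambda>X k' l. (\<Sum>k\<in>UNIV. cnj (u k l) * X k k') / cnj (u k' l))"
  show "Di \<circ> D_op u = id"
  proof (intro ext, simp)
    fix f k' l
    have "(\<Sum>k\<in>UNIV. cnj (u k l) * D_op u f k k')
        = (\<Sum>k\<in>UNIV. \<Sum>l'\<in>UNIV. (f k' l' * cnj (u k' l')) * (cnj (u k l) * u k l'))"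
      unfolding D_op_def by (simp add: sum_distrib_left mult_ac)
    also have "\<dots> = (\<Sum>l'\<in>UNIV. (f k' l' * cnj (u k' l')) * (\<Sum>k\<in>UNIV. cnj (u k l) * u k l'))"
      by (subst sum.swap) (simp only: sum_distrib_left)
    also have "\<dots> = f k' l * cnj (u k' l)"
      by (simp only: c) (simp add: if_distrib cong: if_cong)
    finally show "Di (D_op u f) k' l = f k' l"
      unfolding Di_def using nz[of k' l] by simp
  qed
  show "D_op u \<circ> Di = id"
  proof (intro ext, simp)
    fix X k k'
    have e: "\<And>l. Di X k' l * cnj (u k' l) = (\<Sum>j\<in>UNIV. cnj (u j l) * X j k')"
      unfolding Di_def using nz by simp
    have "D_op u (Di X) k k' = (\<Sum>l\<in>UNIV. u k l * (Di X k' l * cnj (u k' l)))"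
      unfolding D_op_def by (simp add: mult.assoc)
    also have "\<dots> = (\<Sum>l\<in>UNIV. \<Sum>j\<in>UNIV. X j k' * (u k l * cnj (u j l)))"
      by (simp only: e) (simp add: sum_distrib_left mult_ac)
    also have "\<dots> = (\<Sum>j\<in>UNIV. X j k' * (\<Sum>l\<in>UNIV. u k l * cnj (u j l)))"
      by (subst sum.swap) (simp only: sum_distrib_left)
    also have "\<dots> = X k k'"
      by (simp only: r) (simp add: if_distrib cong: if_cong)
    finally show "D_op u (Di X) k k' = X k k'" .
  qed
qed

theorem proposition2p1:
  fixes u :: "'k::finite \<Rightarrow> 'l::finite \<Rightarrow> complex"
  assumes "card (UNIV :: 'k set) = card (UNIV :: 'l set)"
    and "unitary_mat u"
    and "\<forall>k l. u k l \<noteq> 0"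
  shows "unitary_iso (C_op u) (inner_u u) inner_HS \<and> unitary_iso (D_op u) (inner_u u) inner_HS"
proof -
  have r: "\<And>k k'. (\<Sum>l\<in>UNIV. u k l * cnj (u k' l)) = (if k = k' then 1 else 0)"
    and c: "\<And>l l'. (\<Sum>k\<in>UNIV. cnj (u k l) * u k l') = (if l = l' then 1 else 0)"
    using assms(2) unfolding unitary_mat_def by blast+
  have nz: "\<And>k l. u k l \<noteq> 0" using assms(3) by blast
  show ?thesis
    unfolding unitary_iso_def
    using C_lin D_lin C_bij[OF r c nz] D_bij[OF r c nz] C_iso[OF r c] D_iso[OF r c]
    by blast
qed

end
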